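(* There exist finite sets $\mathcal{X},\mathcal{Y}$, a closed convex model class $\Pi\subseteq\Pi_{\mathrm{all}}$, an involution $\Phi$ on $\mathcal{X}$ defining a nontrivial coherence set $\mathcal{C}_{\mathrm{coh}}$, a source model $\pi_0\colon\mathcal{X}\to\Delta(\mathcal{Y})$ with $\pi_0\notin\Pi$, and a convex family $\mathcal{F}$ of Legendre generators such that the minimax solution $$\pi^*_{mm}=\arg\min_{\pi\in\Pi\cap\mathcal{C}_{\mathrm{coh}}}\max_{F\in\mathcal{F}}\mathsf{B}_F(\pi\parallel\pi_0)$$ is unique and there exist $F\in\mathcal{F}$ and $\pi^*\in\Pi\cap\mathcal{C}_{\mathrm{coh}}$ with $\mathsf{B}_F(\pi^*\parallel\pi^*_{mm})>\mathsf{B}_F(\pi^*\parallel\pi_0)$.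
   Context: A model is a map $\pi\colon\mathcal{X}\to\Delta(\mathcal{Y})$, identified with a vector in $\mathbb{R}^{\mathcal{X}\times\mathcal{Y}}$; $\Pi_{\mathrm{all}}=\Delta(\mathcal{Y})^{\mathcal{X}}$; $\mathcal{C}_{\mathrm{coh}}=\{\pi\in\Pi_{\mathrm{all}}:\pi(x)=\pi(\Phi(x))\ \forall x\}$. For a generator $F$ on $\mathbb{R}^{\mathcal{X}\times\mathcal{Y}}$, $\mathsf{B}_F(\pi\parallel\pi')=F(\pi)-F(\pi')-\langle\nabla F(\pi'),\pi-\pi'\rangle$. A Legendre generator is a proper closed convex function differentiable on the interior of its domain whose gradient is a bijection onto the interior of the domain of its conjugate. *)

theory Defs
  imports "HOL-Analysis.Analysis"
begin

text \<open>Models and vectors of R^(X x Y) are represented as functions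
  nat \<times> nat \<Rightarrow> real that vanish outside X \<times> Y, where X, Y are finite sets of
  natural numbers.\<close>

type_synonym vec = "nat \<times> nat \<Rightarrow> real"

definition vsp :: "nat set \<Rightarrow> nat set \<Rightarrow> vec set" where
  "vsp X Y = {v. \<forall>p. p \<notin> X \<times> Y \<longrightarrow> v p = 0}"

definition ip :: "nat set \<Rightarrow> nat set \<Rightarrow> vec \<Rightarrow> vec \<Rightarrow> real" where
  "ip X Y u v = (\<Sum>p\<in>X \<times> Y. u p * v p)"

definition vnorm :: "nat set \<Rightarrow> nat set \<Rightarrow> vec \<Rightarrow> real" where
  "vnorm X Y v = sqrt (ip X Y v v)"

definition vdiff :: "vec \<Rightarrow> vec \<Rightarrow> vec" where
  "vdiff u v = (\<lambda>p. u p - v p)"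

definition vcomb :: "real \<Rightarrow> vec \<Rightarrow> vec \<Rightarrow> vec" where
  "vcomb t u v = (\<lambda>p. t * u p + (1 - t) * v p)"

definition Pi_all :: "nat set \<Rightarrow> nat set \<Rightarrow> vec set" where
  "Pi_all X Y = {\<pi> \<in> vsp X Y. \<forall>x\<in>X. (\<forall>y\<in>Y. 0 \<le> \<pi> (x, y)) \<and> (\<Sum>y\<in>Y. \<pi> (x, y)) = 1}"

definition C_coh :: "nat set \<Rightarrow> nat set \<Rightarrow> (nat \<Rightarrow> nat) \<Rightarrow> vec set" where
  "C_coh X Y \<Phi> = {\<pi> \<in> Pi_all X Y. \<forall>x\<in>X. \<forall>y\<in>Y. \<pi> (x, y) = \<pi> (\<Phi> x, y)}"

definition vclosed :: "nat set \<Rightarrow> nat set \<Rightarrow> vec set \<Rightarrow> bool" where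
  "vclosed X Y S \<longleftrightarrow> S \<subseteq> vsp X Y \<and>
     (\<forall>s v. (\<forall>n. s n \<in> S) \<and> v \<in> vsp X Y \<and> (\<lambda>n. vnorm X Y (vdiff (s n) v)) \<longlonglongrightarrow> 0
        \<longrightarrow> v \<in> S)"

definition vconvex :: "vec set \<Rightarrow> bool" where
  "vconvex S \<longleftrightarrow> (\<forall>u\<in>S. \<forall>v\<in>S. \<forall>t. 0 \<le> t \<and> t \<le> 1 \<longrightarrow> vcomb t u v \<in> S)"

definition vinterior :: "nat set \<Rightarrow> nat set \<Rightarrow> vec set \<Rightarrow> vec set" where
  "vinterior X Y S = {x \<in> S. \<exists>r>0. \<forall>y\<in>vsp X Y. vnorm X Y (vdiff y x) < r \<longrightarrow> y \<in> S}"

text \<open>Generators: extended-real valued functions on \<real>^(X\<times>Y)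
  (values outside the subspace vsp X Y are irrelevant).\<close>

definition edom :: "nat set \<Rightarrow> nat set \<Rightarrow> (vec \<Rightarrow> ereal) \<Rightarrow> vec set" where
  "edom X Y F = {x \<in> vsp X Y. F x < \<infinity>}"

definition proper_fn :: "nat set \<Rightarrow> nat set \<Rightarrow> (vec \<Rightarrow> ereal) \<Rightarrow> bool" where
  "proper_fn X Y F \<longleftrightarrow> (\<forall>x\<in>vsp X Y. F x \<noteq> -\<infinity>) \<and> (\<exists>x\<in>vsp X Y. F x \<noteq> \<infinity>)"

definition closed_fn :: "nat set \<Rightarrow> nat set \<Rightarrow> (vec \<Rightarrow> ereal) \<Rightarrow> bool" where
  "closed_fn X Y F \<longleftrightarrow> (\<forall>s x. (\<forall>n. s n \<in> vsp X Y) \<and> x \<in> vsp X Y \<and>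
      (\<lambda>n. vnorm X Y (vdiff (s n) x)) \<longlonglongrightarrow> 0 \<longrightarrow> F x \<le> liminf (\<lambda>n. F (s n)))"

definition convex_fn :: "nat set \<Rightarrow> nat set \<Rightarrow> (vec \<Rightarrow> ereal) \<Rightarrow> bool" where
  "convex_fn X Y F \<longleftrightarrow> (\<forall>x\<in>vsp X Y. \<forall>y\<in>vsp X Y. \<forall>t. 0 \<le> t \<and> t \<le> 1 \<longrightarrow>
      F (vcomb t x y) \<le> ereal t * F x + ereal (1 - t) * F y)"

definition has_grad :: "nat set \<Rightarrow> nat set \<Rightarrow> (vec \<Rightarrow> ereal) \<Rightarrow> vec \<Rightarrow> vec \<Rightarrow> bool" where
  "has_grad X Y F x g \<longleftrightarrow> g \<in> vsp X Y \<and> \<bar>F x\<bar> \<noteq> \<infinity> \<and>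
     (\<forall>e>0. \<exists>d>0. \<forall>y\<in>vsp X Y. vnorm X Y (vdiff y x) < d \<longrightarrow>
        \<bar>F y - F x - ereal (ip X Y g (vdiff y x))\<bar> \<le> ereal (e * vnorm X Y (vdiff y x)))"

definition grad :: "nat set \<Rightarrow> nat set \<Rightarrow> (vec \<Rightarrow> ereal) \<Rightarrow> vec \<Rightarrow> vec" where
  "grad X Y F x = (THE g. has_grad X Y F x g)"

definition conj_fn :: "nat set \<Rightarrow> nat set \<Rightarrow> (vec \<Rightarrow> ereal) \<Rightarrow> vec \<Rightarrow> ereal" where
  "conj_fn X Y F y = (SUP x\<in>vsp X Y. ereal (ip X Y y x) - F x)"

definition legendre :: "nat set \<Rightarrow> nat set \<Rightarrow> (vec \<Rightarrow> ereal) \<Rightarrow> bool" where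
  "legendre X Y F \<longleftrightarrow> proper_fn X Y F \<and> closed_fn X Y F \<and> convex_fn X Y F \<and>
     (\<forall>x\<in>vinterior X Y (edom X Y F). \<exists>g. has_grad X Y F x g) \<and>
     bij_betw (grad X Y F) (vinterior X Y (edom X Y F))
        (vinterior X Y (edom X Y (conj_fn X Y F)))"

definition bregman :: "nat set \<Rightarrow> nat set \<Rightarrow> (vec \<Rightarrow> ereal) \<Rightarrow> vec \<Rightarrow> vec \<Rightarrow> ereal" where
  "bregman X Y F \<pi> \<pi>' = F \<pi> - F \<pi>' - ereal (ip X Y (grad X Y F \<pi>') (vdiff \<pi> \<pi>'))"

definition convex_family :: "(vec \<Rightarrow> ereal) set \<Rightarrow> bool" where
  "convex_family \<F> \<longleftrightarrow> (\<forall>F\<in>\<F>. \<forall>G\<in>\<F>. \<forall>t. 0 \<le> t \<and> t \<le> 1 \<longrightarrow>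
      (\<lambda>x. ereal t * F x + ereal (1 - t) * G x) \<in> \<F>)"

definition mm_obj :: "nat set \<Rightarrow> nat set \<Rightarrow> (vec \<Rightarrow> ereal) set \<Rightarrow> vec \<Rightarrow> vec \<Rightarrow> ereal" where
  "mm_obj X Y \<F> \<pi>0 \<pi> = (SUP F\<in>\<F>. bregman X Y F \<pi> \<pi>0)"

definition is_mm_sol :: "nat set \<Rightarrow> nat set \<Rightarrow> vec set \<Rightarrow> (nat \<Rightarrow> nat) \<Rightarrow> (vec \<Rightarrow> ereal) set
    \<Rightarrow> vec \<Rightarrow> vec \<Rightarrow> bool" where
  "is_mm_sol X Y M \<Phi> \<F> \<pi>0 \<pi> \<longleftrightarrow> \<pi> \<in> M \<inter> C_coh X Y \<Phi> \<and>
     (\<forall>\<pi>'\<in>M \<inter> C_coh X Y \<Phi>. mm_obj X Y \<F> \<pi>0 \<pi> \<le> mm_obj X Y \<F> \<pi>0 \<pi>')"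

end

theory Submission
  imports Defs
begin


definition qf :: "nat set \<Rightarrow> nat set \<Rightarrow> vec \<Rightarrow> vec \<Rightarrow> real" where
  "qf X Y w x = (\<Sum>p\<in>X\<times>Y. w p * (x p)^2 / 2)"

definition Fq :: "nat set \<Rightarrow> nat set \<Rightarrow> vec \<Rightarrow> vec \<Rightarrow> ereal" where
  "Fq X Y w x = ereal (qf X Y w x)"

definition gq :: "nat set \<Rightarrow> nat set \<Rightarrow> vec \<Rightarrow> vec \<Rightarrow> vec" where
  "gq X Y w x = (\<lambda>p. if p \<in> X\<times>Y then w p * x p else 0)"

lemma ip_self_nonneg: "0 \<le> ip X Y v v"
proof -
  have "0 \<le> (\<Sum>p\<in>X\<times>Y. v p * v p)" by (rule sum_nonneg) simp
  then show ?thesis by (simp add: ip_def)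
qed

lemma vnorm_sq: "(vnorm X Y v)^2 = ip X Y v v"
  unfolding vnorm_def using ip_self_nonneg by simp

lemma vnorm_nonneg: "0 \<le> vnorm X Y v" unfolding vnorm_def using ip_self_nonneg by simp

lemma coord_le_vnorm:
  assumes "finite X" "finite Y" "p \<in> X\<times>Y"
  shows "\<bar>v p\<bar> \<le> vnorm X Y v"
proof -
  have "(v p)^2 \<le> ip X Y v v"
    unfolding ip_def power2_eq_square
    using assms by (intro member_le_sum) auto
  then have "sqrt ((v p)^2) \<le> sqrt (ip X Y v v)" by (rule real_sqrt_le_mono)
  then show ?thesis unfolding vnorm_def by simp
qed

lemma coord_tendsto:
  assumes "finite X" "finite Y" "p \<in> X\<times>Y"
    and "(\<lambda>n. vnorm X Y (vdiff (s n) v)) \<longlonglongrightarrow> 0"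
  shows "(\<lambda>n. s n p) \<longlonglongrightarrow> v p"
proof -
  have "(\<lambda>n. s n p - v p) \<longlonglongrightarrow> 0"
  proof (rule Lim_null_comparison[OF _ assms(4)])
    show "\<forall>\<^sub>F n in sequentially. norm (s n p - v p) \<le> vnorm X Y (vdiff (s n) v)"
    proof (intro always_eventually allI)
      fix n
      show "norm (s n p - v p) \<le> vnorm X Y (vdiff (s n) v)"
        using coord_le_vnorm[OF assms(1-3), of "vdiff (s n) v"] by (simp add: vdiff_def)
    qed
  qed
  then show ?thesis by (simp add: LIM_zero_iff)
qed

lemma qf_diff:
  "qf X Y w y - qf X Y w x - ip X Y (gq X Y w x) (vdiff y x) = qf X Y w (vdiff y x)"
  unfolding qf_def ip_def gq_def vdiff_def
  apply (simp only: sum_subtractf[symmetric])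
  apply (rule sum.cong)
   apply (auto simp: power2_eq_square algebra_simps)
  done

lemma qf_le:
  assumes "\<forall>p\<in>X\<times>Y. 0 \<le> w p \<and> w p \<le> 1"
  shows "qf X Y w v \<le> ip X Y v v / 2"
  unfolding qf_def ip_def sum_divide_distrib
  using assms by (intro sum_mono) (auto simp: power2_eq_square intro!: mult_left_le_one_le)

lemma qf_nonneg:
  assumes "\<forall>p\<in>X\<times>Y. 0 \<le> w p"
  shows "0 \<le> qf X Y w v"
  unfolding qf_def using assms by (intro sum_nonneg) auto

lemma qf_mono:
  assumes "\<forall>p\<in>X\<times>Y. w p \<le> w' p"
  shows "qf X Y w v \<le> qf X Y w' v"
  unfolding qf_def using assms by (intro sum_mono divide_right_mono mult_right_mono) auto

lemma Fq_has_grad: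
  assumes "\<forall>p\<in>X\<times>Y. 0 \<le> w p \<and> w p \<le> 1"
  shows "has_grad X Y (Fq X Y w) x (gq X Y w x)"
  unfolding has_grad_def
proof (intro conjI allI impI)
  show "gq X Y w x \<in> vsp X Y" by (auto simp: gq_def vsp_def)
  show "\<bar>Fq X Y w x\<bar> \<noteq> \<infinity>" by (simp add: Fq_def)
  fix e :: real assume e: "e > 0"
  show "\<exists>d>0. \<forall>y\<in>vsp X Y. vnorm X Y (vdiff y x) < d \<longrightarrow>
     \<bar>Fq X Y w y - Fq X Y w x - ereal (ip X Y (gq X Y w x) (vdiff y x))\<bar>
       \<le> ereal (e * vnorm X Y (vdiff y x))"
  proof (intro exI[of _ "2*e"] conjI ballI impI)
    show "0 < 2*e" using e by simp
    fix y assume "y \<in> vsp X Y" and lt: "vnorm X Y (vdiff y x) < 2*e"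
    define n where "n = vnorm X Y (vdiff y x)"
    have eq: "Fq X Y w y - Fq X Y w x - ereal (ip X Y (gq X Y w x) (vdiff y x))
        = ereal (qf X Y w (vdiff y x))"
      using qf_diff[of X Y w y x] by (simp add: Fq_def)
    have q0: "0 \<le> qf X Y w (vdiff y x)" using assms by (intro qf_nonneg) auto
    have q1: "qf X Y w (vdiff y x) \<le> n^2/2"
      using qf_le[OF assms] vnorm_sq n_def by metis
    have n0: "0 \<le> n" unfolding n_def by (rule vnorm_nonneg)
    have "n*n \<le> (2*e)*n" using n0 lt unfolding n_def[symmetric]
      by (intro mult_right_mono) auto
    then have "n^2/2 \<le> e * n" by (simp add: power2_eq_square)
    then show "\<bar>Fq X Y w y - Fq X Y w x - ereal (ip X Y (gq X Y w x) (vdiff y x))\<bar>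
       \<le> ereal (e * vnorm X Y (vdiff y x))"
      unfolding eq using q0 q1 n_def by simp
  qed
qed

lemma has_grad_real:
  "has_grad X Y (\<lambda>z. ereal (f z)) x g \<longleftrightarrow> g \<in> vsp X Y \<and>
     (\<forall>e>0. \<exists>d>0. \<forall>y\<in>vsp X Y. vnorm X Y (vdiff y x) < d \<longrightarrow>
        \<bar>f y - f x - ip X Y g (vdiff y x)\<bar> \<le> e * vnorm X Y (vdiff y x))"
  unfolding has_grad_def by simp

lemma has_grad_unique:
  assumes fin: "finite X" "finite Y" and x: "x \<in> vsp X Y"
    and g1: "has_grad X Y (\<lambda>z. ereal (f z)) x g1"
    and g2: "has_grad X Y (\<lambda>z. ereal (f z)) x g2"
  shows "g1 = g2"
proof -
  note G1 = g1[unfolded has_grad_real] and G2 = g2[unfolded has_grad_real]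
  define h where "h = vdiff g1 g2"
  define N where "N = vnorm X Y h"
  have N0: "0 \<le> N" unfolding N_def by (rule vnorm_nonneg)
  have NN: "N = 0"
  proof (rule ccontr)
    assume "N \<noteq> 0"
    then have Npos: "N > 0" using N0 by simp
    have e4: "N/4 > 0" using Npos by simp
    obtain d1 where d1: "d1 > 0" "\<forall>y\<in>vsp X Y. vnorm X Y (vdiff y x) < d1 \<longrightarrow>
        \<bar>f y - f x - ip X Y g1 (vdiff y x)\<bar> \<le> N/4 * vnorm X Y (vdiff y x)"
      using conjunct2[OF G1, rule_format, OF e4] by blast
    obtain d2 where d2: "d2 > 0" "\<forall>y\<in>vsp X Y. vnorm X Y (vdiff y x) < d2 \<longrightarrow>
        \<bar>f y - f x - ip X Y g2 (vdiff y x)\<bar> \<le> N/4 * vnorm X Y (vdiff y x)"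
      using conjunct2[OF G2, rule_format, OF e4] by blast
    define t where "t = min d1 d2 / (2 * N)"
    have t0: "t > 0" unfolding t_def using d1 d2 Npos by simp
    define y where "y = (\<lambda>p. x p + t * h p)"
    have hv: "h \<in> vsp X Y" using G1 G2 unfolding h_def vsp_def vdiff_def by auto
    have yv: "y \<in> vsp X Y" using x hv unfolding y_def vsp_def by auto
    have yx: "vdiff y x = (\<lambda>p. t * h p)" unfolding y_def vdiff_def by auto
    have ipth: "ip X Y (\<lambda>p. t * h p) (\<lambda>p. t * h p) = t^2 * ip X Y h h"
      unfolding ip_def by (simp add: sum_distrib_left power2_eq_square algebra_simps)
    have nyx: "vnorm X Y (vdiff y x) = t * N"
      unfolding yx vnorm_def ipth N_def using t0
      by (simp add: real_sqrt_mult)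
    have small: "vnorm X Y (vdiff y x) < d1" "vnorm X Y (vdiff y x) < d2"
      unfolding nyx t_def using Npos d1 d2 by (auto simp: field_simps)
    have a1: "\<bar>f y - f x - ip X Y g1 (vdiff y x)\<bar> \<le> N/4 * (t*N)"
      using d1(2) yv small nyx by auto
    have a2: "\<bar>f y - f x - ip X Y g2 (vdiff y x)\<bar> \<le> N/4 * (t*N)"
      using d2(2) yv small nyx by auto
    have "ip X Y g1 (vdiff y x) - ip X Y g2 (vdiff y x) = t * ip X Y h h"
      unfolding yx ip_def sum_subtractf[symmetric] sum_distrib_left
      by (rule sum.cong) (simp_all add: h_def vdiff_def algebra_simps)
    also have "ip X Y h h = N^2" unfolding N_def by (simp add: vnorm_sq)
    finally have eqf: "ip X Y g1 (vdiff y x) - ip X Y g2 (vdiff y x) = t * N^2" .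
    have c1: "ip X Y g1 (vdiff y x) - (f y - f x) \<le> N/4 * (t*N)" using abs_le_D2[OF a1] by linarith
    have c2: "f y - f x - ip X Y g2 (vdiff y x) \<le> N/4 * (t*N)" using abs_le_D1[OF a2] by linarith
    have "t * N^2 \<le> 2 * (N/4 * (t*N))" using c1 c2 eqf by linarith
    also have "2 * (N/4 * (t*N)) = t * N^2 / 2" by (simp add: power2_eq_square)
    finally have "t * N^2 \<le> t * N^2 / 2" .
    moreover have "t * N^2 > 0" using t0 Npos by simp
    ultimately show False by simp
  qed
  then have "ip X Y h h = 0" unfolding N_def by (metis vnorm_sq zero_power2)
  then have "\<forall>p\<in>X\<times>Y. h p * h p = 0"
    unfolding ip_def using fin by (subst (asm) sum_nonneg_eq_0_iff) auto
  then have eqp: "\<forall>p\<in>X\<times>Y. g1 p = g2 p" unfolding h_def vdiff_def by auto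
  have gv: "g1 \<in> vsp X Y" "g2 \<in> vsp X Y" using conjunct1[OF G1] conjunct1[OF G2] by simp_all
  show ?thesis
  proof (rule ext)
    fix p
    show "g1 p = g2 p"
    proof (cases "p \<in> X\<times>Y")
      case True
      show ?thesis using bspec[OF eqp True] .
    next
      case False
      have "g1 p = 0" "g2 p = 0" using gv False unfolding vsp_def by (cases p, auto)+
      then show ?thesis by simp
    qed
  qed
qed

lemma Fq_eq: "Fq X Y w = (\<lambda>z. ereal (qf X Y w z))"
  by (simp add: Fq_def fun_eq_iff)

lemma grad_Fq:
  assumes fin: "finite X" "finite Y" and w: "\<forall>p\<in>X\<times>Y. 0 \<le> w p \<and> w p \<le> 1"
    and x: "x \<in> vsp X Y"
  shows "grad X Y (Fq X Y w) x = gq X Y w x"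
  unfolding grad_def
proof (rule the_equality)
  show "has_grad X Y (Fq X Y w) x (gq X Y w x)" by (rule Fq_has_grad[OF w])
  fix g assume "has_grad X Y (Fq X Y w) x g"
  then show "g = gq X Y w x"
    using has_grad_unique[OF fin x, of "qf X Y w" g "gq X Y w x"] Fq_has_grad[OF w, of x]
    unfolding Fq_eq by simp
qed

lemma vinterior_vsp: "vinterior X Y (vsp X Y) = vsp X Y"
  unfolding vinterior_def by (auto intro!: exI[of _ "1::real"])

lemma edom_Fq: "edom X Y (Fq X Y w) = vsp X Y"
  unfolding edom_def Fq_def by auto

lemma conj_Fq_finite:
  assumes w: "\<forall>p\<in>X\<times>Y. 0 < w p"
  shows "conj_fn X Y (Fq X Y w) y < \<infinity>"
proof -
  have "conj_fn X Y (Fq X Y w) y \<le> ereal (\<Sum>p\<in>X\<times>Y. (y p)^2 / (2 * w p))"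
    unfolding conj_fn_def
  proof (rule SUP_least)
    fix x assume "x \<in> vsp X Y"
    have "ip X Y y x - qf X Y w x \<le> (\<Sum>p\<in>X\<times>Y. (y p)^2 / (2 * w p))"
      unfolding ip_def qf_def sum_subtractf[symmetric]
    proof (rule sum_mono)
      fix p assume "p \<in> X\<times>Y"
      then have wp: "0 < w p" using w by auto
      have e: "(y p)^2/(2*w p) - (y p * x p - w p * (x p)^2/2) = (y p - w p * x p)^2 / (2 * w p)"
        using wp by (simp add: field_simps power2_eq_square)
      have "0 \<le> (y p - w p * x p)^2 / (2 * w p)" using wp by simp
      then show "y p * x p - w p * (x p)^2/2 \<le> (y p)^2/(2 * w p)" using e by linarith
    qed
    then show "ereal (ip X Y y x) - Fq X Y w x \<le> ereal (\<Sum>p\<in>X\<times>Y. (y p)^2 / (2 * w p))"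
      by (simp add: Fq_def)
  qed
  then show ?thesis by (rule order.strict_trans1) simp
qed

lemma edom_conj_Fq:
  assumes w: "\<forall>p\<in>X\<times>Y. 0 < w p"
  shows "edom X Y (conj_fn X Y (Fq X Y w)) = vsp X Y"
  unfolding edom_def using conj_Fq_finite[OF w] by auto

lemma closed_Fq:
  assumes fin: "finite X" "finite Y"
  shows "closed_fn X Y (Fq X Y w)"
  unfolding closed_fn_def
proof (intro allI impI)
  fix s x assume a: "(\<forall>n. s n \<in> vsp X Y) \<and> x \<in> vsp X Y \<and>
      (\<lambda>n. vnorm X Y (vdiff (s n) x)) \<longlonglongrightarrow> 0"
  have "(\<lambda>n. qf X Y w (s n)) \<longlonglongrightarrow> qf X Y w x"
    unfolding qf_def
    by (intro tendsto_intros coord_tendsto[OF fin _, of _ s x]) (use a in auto)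
  then have "(\<lambda>n. Fq X Y w (s n)) \<longlonglongrightarrow> Fq X Y w x"
    unfolding Fq_def by simp
  then have "liminf (\<lambda>n. Fq X Y w (s n)) = Fq X Y w x"
    by (intro lim_imp_Liminf) simp_all
  then show "Fq X Y w x \<le> liminf (\<lambda>n. Fq X Y w (s n))" by simp
qed

lemma convex_Fq:
  assumes w: "\<forall>p\<in>X\<times>Y. 0 \<le> w p"
  shows "convex_fn X Y (Fq X Y w)"
  unfolding convex_fn_def
proof (intro ballI allI impI)
  fix x y :: vec and t :: real assume t: "0 \<le> t \<and> t \<le> 1"
  have "qf X Y w (vcomb t x y) \<le> t * qf X Y w x + (1 - t) * qf X Y w y"
    unfolding qf_def vcomb_def sum_distrib_left sum.distrib[symmetric]
  proof (rule sum_mono)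
    fix p assume "p \<in> X\<times>Y"
    then have wp: "0 \<le> w p" using w by auto
    have e: "t * (w p * (x p)^2 / 2) + (1 - t) * (w p * (y p)^2 / 2) - w p * (t * x p + (1 - t) * y p)^2 / 2
       = w p * t * (1 - t) * (x p - y p)^2 / 2"
      by (simp add: field_simps power2_eq_square)
    have "0 \<le> w p * t * (1 - t) * (x p - y p)^2 / 2" using wp t by simp
    then show "w p * (t * x p + (1 - t) * y p)^2 / 2 \<le> t * (w p * (x p)^2 / 2) + (1 - t) * (w p * (y p)^2 / 2)"
      using e by linarith
  qed
  then show "Fq X Y w (vcomb t x y) \<le> ereal t * Fq X Y w x + ereal (1 - t) * Fq X Y w y"
    by (simp add: Fq_def)
qed

lemma legendre_Fq:
  assumes fin: "finite X" "finite Y" and w: "\<forall>p\<in>X\<times>Y. 0 < w p \<and> w p \<le> 1"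
  shows "legendre X Y (Fq X Y w)"
proof -
  have w': "\<forall>p\<in>X\<times>Y. 0 \<le> w p \<and> w p \<le> 1" using w less_imp_le by blast
  have w0: "\<forall>p\<in>X\<times>Y. 0 < w p" using w by auto
  have wne: "\<And>x y. x \<in> X \<Longrightarrow> y \<in> Y \<Longrightarrow> w (x,y) \<noteq> 0" using w by fastforce
  have bij: "bij_betw (gq X Y w) (vsp X Y) (vsp X Y)"
    by (rule bij_betw_byWitness[where f'="\<lambda>y p. if p \<in> X\<times>Y then y p / w p else 0"])
       (use w in \<open>auto simp: gq_def vsp_def fun_eq_iff wne\<close>)
  have "bij_betw (grad X Y (Fq X Y w)) (vsp X Y) (vsp X Y)"
    using bij by (subst bij_betw_cong[where g="gq X Y w"]) (auto simp: grad_Fq[OF fin w'])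
  then show ?thesis
    unfolding legendre_def vinterior_vsp edom_Fq edom_conj_Fq[OF w0]
  proof (intro conjI)
    show "proper_fn X Y (Fq X Y w)" by (auto simp: proper_fn_def Fq_def vsp_def)
    show "closed_fn X Y (Fq X Y w)" by (rule closed_Fq[OF fin])
    show "convex_fn X Y (Fq X Y w)" using w' by (intro convex_Fq) blast
    show "\<forall>x\<in>vsp X Y. \<exists>g. has_grad X Y (Fq X Y w) x g" using Fq_has_grad[OF w'] by blast
  qed
qed

lemma bregman_Fq:
  assumes fin: "finite X" "finite Y" and w: "\<forall>p\<in>X\<times>Y. 0 \<le> w p \<and> w p \<le> 1"
    and x: "x \<in> vsp X Y"
  shows "bregman X Y (Fq X Y w) y x = ereal (qf X Y w (vdiff y x))"
  unfolding bregman_def grad_Fq[OF fin w x] using qf_diff[of X Y w y x]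
  by (simp add: Fq_def)



lemma vconvex_Ccoh: "vconvex (C_coh X Y \<Phi>)"
  unfolding vconvex_def
proof (intro ballI allI impI)
  fix u v and t :: real assume u: "u \<in> C_coh X Y \<Phi>" and v: "v \<in> C_coh X Y \<Phi>" and t: "0 \<le> t \<and> t \<le> 1"
  have uv: "u \<in> vsp X Y" "v \<in> vsp X Y" using u v by (auto simp: C_coh_def Pi_all_def)
  have nn: "\<And>x y. x \<in> X \<Longrightarrow> y \<in> Y \<Longrightarrow> 0 \<le> u (x,y) \<and> 0 \<le> v (x,y)"
    using u v by (auto simp: C_coh_def Pi_all_def)
  have s1: "\<And>x. x \<in> X \<Longrightarrow> (\<Sum>y\<in>Y. u (x,y)) = 1 \<and> (\<Sum>y\<in>Y. v (x,y)) = 1"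
    using u v by (auto simp: C_coh_def Pi_all_def)
  have ch: "\<And>x y. x \<in> X \<Longrightarrow> y \<in> Y \<Longrightarrow> u (x,y) = u (\<Phi> x, y) \<and> v (x,y) = v (\<Phi> x, y)"
    using u v by (auto simp: C_coh_def)
  show "vcomb t u v \<in> C_coh X Y \<Phi>"
    unfolding C_coh_def Pi_all_def
  proof (intro CollectI conjI ballI)
    show "vcomb t u v \<in> vsp X Y" using uv by (auto simp: vsp_def vcomb_def)
    fix x assume x: "x \<in> X"
    show "(\<Sum>y\<in>Y. vcomb t u v (x, y)) = 1"
      using s1[OF x] by (simp add: vcomb_def sum.distrib sum_distrib_left[symmetric])
    fix y assume y: "y \<in> Y"
    show "0 \<le> vcomb t u v (x, y)" using nn[OF x y] t by (simp add: vcomb_def)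
    show "vcomb t u v (x, y) = vcomb t u v (\<Phi> x, y)" using ch[OF x y] by (simp add: vcomb_def)
  qed
qed

lemma vclosed_Ccoh:
  assumes fin: "finite X" "finite Y" and Phi: "\<Phi> ` X \<subseteq> X"
  shows "vclosed X Y (C_coh X Y \<Phi>)"
  unfolding vclosed_def
proof (intro conjI allI impI)
  show "C_coh X Y \<Phi> \<subseteq> vsp X Y" by (auto simp: C_coh_def Pi_all_def)
  fix s v assume a: "(\<forall>n. s n \<in> C_coh X Y \<Phi>) \<and> v \<in> vsp X Y \<and>
      (\<lambda>n. vnorm X Y (vdiff (s n) v)) \<longlonglongrightarrow> 0"
  have conv: "\<And>x y. x \<in> X \<Longrightarrow> y \<in> Y \<Longrightarrow> (\<lambda>n. s n (x,y)) \<longlonglongrightarrow> v (x,y)"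
    using coord_tendsto[OF fin] a by blast
  have sC: "\<And>n. s n \<in> C_coh X Y \<Phi>" using a by blast
  have nonneg: "0 \<le> v (x,y)" if xy: "x \<in> X" "y \<in> Y" for x y
  proof (rule LIMSEQ_le_const[OF conv[OF xy]])
    have "\<forall>n. 0 \<le> s n (x, y)"
      using sC xy unfolding C_coh_def Pi_all_def by blast
    then show "\<exists>N. \<forall>n\<ge>N. 0 \<le> s n (x, y)" by blast
  qed
  have sum1: "(\<Sum>y\<in>Y. v (x,y)) = 1" if x: "x \<in> X" for x
  proof -
    have T: "(\<lambda>n. \<Sum>y\<in>Y. s n (x,y)) \<longlonglongrightarrow> (\<Sum>y\<in>Y. v (x,y))"
      by (intro tendsto_sum conv x)
    have "\<forall>n. (\<Sum>y\<in>Y. s n (x,y)) = 1"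
      using sC x unfolding C_coh_def Pi_all_def by blast
    then have E: "(\<lambda>n. \<Sum>y\<in>Y. s n (x,y)) = (\<lambda>n. 1)" by (intro ext) blast
    show ?thesis using T unfolding E using LIMSEQ_unique tendsto_const by metis
  qed
  have coh: "v (x,y) = v (\<Phi> x, y)" if xy: "x \<in> X" "y \<in> Y" for x y
  proof -
    have "\<Phi> x \<in> X" using Phi xy by auto
    then have c2: "(\<lambda>n. s n (\<Phi> x,y)) \<longlonglongrightarrow> v (\<Phi> x,y)" using conv xy by auto
    have "(\<lambda>n. s n (\<Phi> x,y)) = (\<lambda>n. s n (x,y))" using sC xy by (auto simp: C_coh_def)
    then show ?thesis using c2 conv[OF xy] LIMSEQ_unique by metis
  qed
  show "v \<in> C_coh X Y \<Phi>" using a nonneg sum1 coh by (auto simp: C_coh_def Pi_all_def)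
qed

lemma qf_comb: "qf X Y (\<lambda>p. t * u p + (1-t) * v p) x = t * qf X Y u x + (1-t) * qf X Y v x"
  unfolding qf_def sum_distrib_left sum.distrib[symmetric]
  by (rule sum.cong) (auto simp: field_simps)

definition X0 :: "nat set" where "X0 = {0,1}"
definition Phi0 :: "nat \<Rightarrow> nat" where "Phi0 x = 1 - x"
definition W0 :: "vec set" where "W0 = {w. \<forall>p\<in>X0\<times>X0. 1/4 \<le> w p \<and> w p \<le> 1}"
definition FF0 :: "(vec \<Rightarrow> ereal) set" where "FF0 = Fq X0 X0 ` W0"
definition pi0 :: vec where "pi0 = (\<lambda>p. if p = (0,1) \<or> p = (1,0) then 1 else 0)"
definition pimm :: vec where "pimm = (\<lambda>p. if p \<in> X0\<times>X0 then 1/2 else 0)"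
definition pis :: vec where "pis = (\<lambda>p. if p = (0,0) \<or> p = (1,0) then 1 else 0)"

lemma finX0: "finite X0" by (simp add: X0_def)

lemma XX: "X0 \<times> X0 = {(0,0),(0,1),(1,0),(1,1)}" by (auto simp: X0_def)

lemma sumXX: "(\<Sum>p\<in>X0\<times>X0. f p) = f (0,0) + f (0,1) + f (1,0) + f (1,1)"
  by (simp add: XX add.assoc)

lemma sumX: "(\<Sum>y\<in>X0. f y) = f 0 + f 1" by (simp add: X0_def)

lemma W0_D: "w \<in> W0 \<Longrightarrow> p \<in> X0\<times>X0 \<Longrightarrow> 1/4 \<le> w p \<and> w p \<le> 1"
  unfolding W0_def by blast

lemma W0_01: "w \<in> W0 \<Longrightarrow> \<forall>p\<in>X0\<times>X0. 0 \<le> w p \<and> w p \<le> 1"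
  using W0_D by fastforce

lemma W0_pos: "w \<in> W0 \<Longrightarrow> \<forall>p\<in>X0\<times>X0. 0 < w p \<and> w p \<le> 1"
  using W0_D by fastforce

lemma convex_FF0: "convex_family FF0"
  unfolding convex_family_def FF0_def
proof (intro ballI allI impI)
  fix F G and t :: real assume F: "F \<in> Fq X0 X0 ` W0" and G: "G \<in> Fq X0 X0 ` W0" and t: "0 \<le> t \<and> t \<le> 1"
  obtain u where u: "u \<in> W0" "F = Fq X0 X0 u" using F by auto
  obtain v where v: "v \<in> W0" "G = Fq X0 X0 v" using G by auto
  have eq: "(\<lambda>x. ereal t * F x + ereal (1-t) * G x) = Fq X0 X0 (\<lambda>p. t * u p + (1-t) * v p)"
    unfolding u v by (simp add: fun_eq_iff Fq_def qf_comb)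
  have "(\<lambda>p. t * u p + (1-t) * v p) \<in> W0"
    unfolding W0_def
  proof (intro CollectI ballI conjI)
    fix p assume p: "p \<in> X0\<times>X0"
    have b: "1/4 \<le> u p" "u p \<le> 1" "1/4 \<le> v p" "v p \<le> 1" using W0_D[OF u(1) p] W0_D[OF v(1) p] by auto
    have a1: "t * (1/4) \<le> t * u p" using b t by (intro mult_left_mono) simp_all
    have a2: "(1-t) * (1/4) \<le> (1-t) * v p" using b t by (intro mult_left_mono) simp_all
    have a3: "t * u p \<le> t * 1" using b t by (intro mult_left_mono) simp_all
    have a4: "(1-t) * v p \<le> (1-t) * 1" using b t by (intro mult_left_mono) simp_all
    have s1: "t * (1/4) + (1-t) * (1/4) \<le> t * u p + (1-t) * v p" using a1 a2 by (rule add_mono)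
    have s2: "t * u p + (1-t) * v p \<le> t * 1 + (1-t) * 1" using a3 a4 by (rule add_mono)
    have e1: "t * (1/4) + (1-t) * (1/4) = (1/4::real)" by (simp add: field_simps)
    have e2: "t * 1 + (1-t) * 1 = (1::real)" by simp
    show "1/4 \<le> t * u p + (1-t) * v p" using s1 unfolding e1 .
    show "t * u p + (1-t) * v p \<le> 1" using s2 unfolding e2 .
  qed
  then show "(\<lambda>x. ereal t * F x + ereal (1-t) * G x) \<in> Fq X0 X0 ` W0" unfolding eq by blast
qed

lemma pi0_vsp: "pi0 \<in> vsp X0 X0" by (auto simp: vsp_def pi0_def X0_def)

lemma mm_obj0: "mm_obj X0 X0 FF0 pi0 \<pi> = ereal (qf X0 X0 (\<lambda>_. 1) (vdiff \<pi> pi0))"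
proof -
  have "mm_obj X0 X0 FF0 pi0 \<pi> = (SUP w\<in>W0. ereal (qf X0 X0 w (vdiff \<pi> pi0)))"
    unfolding mm_obj_def FF0_def image_image
    by (rule SUP_cong) (auto simp: bregman_Fq[OF finX0 finX0 W0_01 pi0_vsp])
  also have "\<dots> = ereal (qf X0 X0 (\<lambda>_. 1) (vdiff \<pi> pi0))"
  proof (rule antisym)
    show "(SUP w\<in>W0. ereal (qf X0 X0 w (vdiff \<pi> pi0))) \<le> ereal (qf X0 X0 (\<lambda>_. 1) (vdiff \<pi> pi0))"
      by (rule SUP_least) (auto intro!: qf_mono dest: W0_01)
    have "(\<lambda>_. 1) \<in> W0" by (simp add: W0_def)
    then show "ereal (qf X0 X0 (\<lambda>_. 1) (vdiff \<pi> pi0)) \<le> (SUP w\<in>W0. ereal (qf X0 X0 w (vdiff \<pi> pi0)))"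
      by (rule SUP_upper2) simp
  qed
  finally show ?thesis .
qed

lemma Ccoh0_D:
  assumes "\<pi> \<in> C_coh X0 X0 Phi0"
  shows "\<pi> \<in> vsp X0 X0" "\<pi> (1,0) = \<pi> (0,0)" "\<pi> (0,1) = 1 - \<pi> (0,0)" "\<pi> (1,1) = 1 - \<pi> (0,0)"
    "0 \<le> \<pi> (0,0)" "\<pi> (0,0) \<le> 1"
proof -
  have A: "\<forall>x\<in>X0. (\<forall>y\<in>X0. 0 \<le> \<pi> (x,y)) \<and> (\<Sum>y\<in>X0. \<pi> (x,y)) = 1"
    and B: "\<forall>x\<in>X0. \<forall>y\<in>X0. \<pi> (x,y) = \<pi> (Phi0 x, y)" and V: "\<pi> \<in> vsp X0 X0"
    using assms by (auto simp: C_coh_def Pi_all_def)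
  have m: "0 \<in> X0" "1 \<in> X0" by (auto simp: X0_def)
  have b1: "\<pi> (0,0) = \<pi> (1,0)" "\<pi> (0,1) = \<pi> (1,1)"
    using bspec[OF bspec[OF B m(1)] m(1)] bspec[OF bspec[OF B m(1)] m(2)] by (simp_all add: Phi0_def)
  have s: "\<pi> (0,0) + \<pi> (0,1) = 1" using A m(1) by (simp add: sumX)
  have n: "0 \<le> \<pi> (0,0)" "0 \<le> \<pi> (0,1)" using A m by auto
  show "\<pi> \<in> vsp X0 X0" by (rule V)
  show "\<pi> (1,0) = \<pi> (0,0)" "\<pi> (0,1) = 1 - \<pi> (0,0)" "\<pi> (1,1) = 1 - \<pi> (0,0)"
    "0 \<le> \<pi> (0,0)" "\<pi> (0,0) \<le> 1" using b1 s n by linarith+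
qed

lemma obj_C:
  assumes "\<pi> \<in> C_coh X0 X0 Phi0"
  shows "qf X0 X0 (\<lambda>_. 1) (vdiff \<pi> pi0) = (\<pi> (0,0))^2 + (1 - \<pi> (0,0))^2"
  unfolding qf_def sumXX vdiff_def Ccoh0_D(2-4)[OF assms]
  by (simp add: pi0_def power2_eq_square algebra_simps)

lemma pimm_C: "pimm \<in> C_coh X0 X0 Phi0"
  by (auto simp: C_coh_def Pi_all_def vsp_def pimm_def X0_def Phi0_def)

lemma pis_C: "pis \<in> C_coh X0 X0 Phi0"
  by (auto simp: C_coh_def Pi_all_def vsp_def pis_def X0_def Phi0_def)

lemma pi0_all: "pi0 \<in> Pi_all X0 X0"
  by (auto simp: Pi_all_def vsp_def pi0_def X0_def)

lemma pi0_notC: "pi0 \<notin> C_coh X0 X0 Phi0"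
proof
  assume "pi0 \<in> C_coh X0 X0 Phi0"
  from Ccoh0_D(2)[OF this] show False by (simp add: pi0_def)
qed

lemma mm_sol_pimm: "is_mm_sol X0 X0 (C_coh X0 X0 Phi0) Phi0 FF0 pi0 pimm"
  unfolding is_mm_sol_def
proof (intro conjI ballI)
  show "pimm \<in> C_coh X0 X0 Phi0 \<inter> C_coh X0 X0 Phi0" using pimm_C by simp
  fix \<pi>' assume "\<pi>' \<in> C_coh X0 X0 Phi0 \<inter> C_coh X0 X0 Phi0"
  then have c: "\<pi>' \<in> C_coh X0 X0 Phi0" by simp
  have p: "pimm (0,0) = 1/2" by (simp add: pimm_def X0_def)
  have "(1/2::real) \<le> (\<pi>' (0,0))^2 + (1 - \<pi>' (0,0))^2"
  proof -
    have "(\<pi>' (0,0))^2 + (1 - \<pi>' (0,0))^2 - 1/2 = 2 * (\<pi>' (0,0) - 1/2)^2"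
      by (simp add: power2_eq_square algebra_simps)
    moreover have "0 \<le> 2 * (\<pi>' (0,0) - 1/2)^2" by simp
    ultimately show ?thesis by linarith
  qed
  then show "mm_obj X0 X0 FF0 pi0 pimm \<le> mm_obj X0 X0 FF0 pi0 \<pi>'"
    unfolding mm_obj0 obj_C[OF c] obj_C[OF pimm_C] p by (simp add: power2_eq_square)
qed

lemma mm_sol_unique:
  assumes "is_mm_sol X0 X0 (C_coh X0 X0 Phi0) Phi0 FF0 pi0 \<pi>"
  shows "\<pi> = pimm"
proof -
  have c: "\<pi> \<in> C_coh X0 X0 Phi0" using assms by (simp add: is_mm_sol_def)
  have "mm_obj X0 X0 FF0 pi0 \<pi> \<le> mm_obj X0 X0 FF0 pi0 pimm"
    using assms pimm_C by (simp add: is_mm_sol_def)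
  then have le: "(\<pi> (0,0))^2 + (1 - \<pi> (0,0))^2 \<le> 1/2"
    unfolding mm_obj0 obj_C[OF c] obj_C[OF pimm_C] by (simp add: pimm_def X0_def power2_eq_square)
  have "(\<pi> (0,0))^2 + (1 - \<pi> (0,0))^2 - 1/2 = 2 * (\<pi> (0,0) - 1/2)^2"
    by (simp add: power2_eq_square algebra_simps)
  moreover have "0 \<le> (\<pi> (0,0) - 1/2)^2" by simp
  ultimately have "(\<pi> (0,0) - 1/2)^2 = 0" using le by linarith
  then have a: "\<pi> (0,0) = 1/2" by simp
  note D = Ccoh0_D[OF c]
  show ?thesis
  proof
    fix p :: "nat \<times> nat"
    show "\<pi> p = pimm p"
    proof (cases "p \<in> X0 \<times> X0")
      case True
      then show ?thesis using D a unfolding XX by (auto simp: pimm_def X0_def)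
    next
      case False
      then show ?thesis using D(1) by (cases p) (simp add: vsp_def pimm_def)
    qed
  qed
qed

theorem theorem6:
  shows "\<exists>(X::nat set) (Y::nat set) (M::vec set) (\<Phi>::nat \<Rightarrow> nat) (\<pi>0::vec)
            (\<F>::(vec \<Rightarrow> ereal) set).
    finite X \<and> finite Y \<and>
    M \<subseteq> Pi_all X Y \<and> vclosed X Y M \<and> vconvex M \<and>
    \<Phi> ` X \<subseteq> X \<and> (\<forall>x\<in>X. \<Phi> (\<Phi> x) = x) \<and> C_coh X Y \<Phi> \<noteq> Pi_all X Y \<and>
    \<pi>0 \<in> Pi_all X Y \<and> \<pi>0 \<notin> M \<and>
    \<F> \<noteq> {} \<and> convex_family \<F> \<and> (\<forall>F\<in>\<F>. legendre X Y F) \<and>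
    (\<forall>F\<in>\<F>. \<pi>0 \<in> vinterior X Y (edom X Y F)) \<and>
    (\<exists>!\<pi>. is_mm_sol X Y M \<Phi> \<F> \<pi>0 \<pi>) \<and>
    (\<exists>F\<in>\<F>. \<exists>\<pi>s\<in>M \<inter> C_coh X Y \<Phi>.
        (THE \<pi>. is_mm_sol X Y M \<Phi> \<F> \<pi>0 \<pi>) \<in> vinterior X Y (edom X Y F) \<and>
        bregman X Y F \<pi>s (THE \<pi>. is_mm_sol X Y M \<Phi> \<F> \<pi>0 \<pi>) > bregman X Y F \<pi>s \<pi>0)"
proof -
  have the_eq: "(THE \<pi>. is_mm_sol X0 X0 (C_coh X0 X0 Phi0) Phi0 FF0 pi0 \<pi>) = pimm"
    using mm_sol_pimm mm_sol_unique by (rule the_equality)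
  have uniq: "\<exists>!\<pi>. is_mm_sol X0 X0 (C_coh X0 X0 Phi0) Phi0 FF0 pi0 \<pi>"
    using mm_sol_pimm mm_sol_unique by blast
  have fin: "finite X0" by (rule finX0)
  have sub: "C_coh X0 X0 Phi0 \<subseteq> Pi_all X0 X0" by (auto simp: C_coh_def)
  have Phi1: "Phi0 ` X0 \<subseteq> X0" by (auto simp: Phi0_def X0_def)
  have Phi2: "\<forall>x\<in>X0. Phi0 (Phi0 x) = x" by (auto simp: Phi0_def X0_def)
  have ne: "C_coh X0 X0 Phi0 \<noteq> Pi_all X0 X0" using pi0_all pi0_notC by blast
  have W1: "(\<lambda>_. 1) \<in> W0" by (simp add: W0_def)
  have FFne: "FF0 \<noteq> {}" using W1 by (auto simp: FF0_def)
  have leg: "\<forall>F\<in>FF0. legendre X0 X0 F"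
    unfolding FF0_def using legendre_Fq[OF fin fin W0_pos] by blast
  have int: "\<forall>F\<in>FF0. pi0 \<in> vinterior X0 X0 (edom X0 X0 F)"
    unfolding FF0_def using pi0_vsp by (auto simp: edom_Fq vinterior_vsp)
  define v :: vec where "v = (\<lambda>p. if fst p = 0 then 1/4 else 1)"
  have vW: "v \<in> W0" by (auto simp: W0_def v_def)
  have pimm_vsp: "pimm \<in> vsp X0 X0" using Ccoh0_D(1)[OF pimm_C] .
  have b1: "bregman X0 X0 (Fq X0 X0 v) pis pimm = ereal (5/16)"
    unfolding bregman_Fq[OF fin fin W0_01[OF vW] pimm_vsp]
    by (simp add: qf_def sumXX vdiff_def v_def pis_def pimm_def X0_def power2_eq_square)
  have b2: "bregman X0 X0 (Fq X0 X0 v) pis pi0 = ereal (1/4)"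
    unfolding bregman_Fq[OF fin fin W0_01[OF vW] pi0_vsp]
    by (simp add: qf_def sumXX vdiff_def v_def pis_def pi0_def power2_eq_square)
  have last: "\<exists>F\<in>FF0. \<exists>\<pi>s\<in>C_coh X0 X0 Phi0 \<inter> C_coh X0 X0 Phi0.
        (THE \<pi>. is_mm_sol X0 X0 (C_coh X0 X0 Phi0) Phi0 FF0 pi0 \<pi>) \<in> vinterior X0 X0 (edom X0 X0 F) \<and>
        bregman X0 X0 F \<pi>s (THE \<pi>. is_mm_sol X0 X0 (C_coh X0 X0 Phi0) Phi0 FF0 pi0 \<pi>) > bregman X0 X0 F \<pi>s pi0"
    unfolding the_eq
  proof (intro bexI conjI)
    show "Fq X0 X0 v \<in> FF0" using vW by (simp add: FF0_def)
    show "pis \<in> C_coh X0 X0 Phi0 \<inter> C_coh X0 X0 Phi0" using pis_C by simp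
    show "pimm \<in> vinterior X0 X0 (edom X0 X0 (Fq X0 X0 v))"
      using pimm_vsp by (simp add: edom_Fq vinterior_vsp)
    show "bregman X0 X0 (Fq X0 X0 v) pis pimm > bregman X0 X0 (Fq X0 X0 v) pis pi0"
      unfolding b1 b2 by simp
  qed
  show ?thesis
    apply (rule exI[of _ X0], rule exI[of _ X0], rule exI[of _ "C_coh X0 X0 Phi0"],
        rule exI[of _ Phi0], rule exI[of _ pi0], rule exI[of _ FF0])
    by (intro conjI fin sub vclosed_Ccoh[OF fin fin Phi1] vconvex_Ccoh Phi1 Phi2 ne pi0_all pi0_notC
      FFne convex_FF0 leg int uniq last)
qed

end
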